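(* Let $K$ be a CMI and let $K'$ be a sub-CMI of $K$. For any joint distribution of $X_1,\dots,X_n$, if $K$ is valid then $K'$ is valid.
   Context: Setting: $X_1,\dots,X_n$ jointly distributed discrete random variables with $H(X_i)<\infty$; distribution unspecified. $X_\alpha=(X_i,i\in\alpha)$, $X_\emptyset$ constant. A CMI is $K=(C,\langle Q_1,\dots,Q_k\rangle)$, $k\ge0$, $C\subseteq\{1,\dots,n\}$, $\langle\cdot\rangle$ an unordered multiset of subsets; valid (for a given distribution) if $\sum_iH(X_{Q_i}|X_C)-H(X_{Q_1},\dots,X_{Q_k}|X_C)=0$. Empty members may be deleted. Degenerate = valid for every distribution; all degenerate CMIs are identified and written $(\cdot,\langle\ \rangle)$. $\mathrm{pur}(K)=(C,\langle Q_i\setminus C:Q_i\setminus C\ne\emptyset\rangle)$. For pure $K$: $\mathbb I_K$ = indices lying in at least two members of the collection if $k\ge2$, else $\emptyset$; $P_1,\dots,P_t$ the nonempty sets among $Q_i\setminus\mathbb I_K$; $\mathrm{can}(K)=(\cdot,\langle\ \rangle)$ if $k\le1$, $(C,\langle\mathbb I_K,\mathbb I_K\rangle)$ if $k\ge2,\mathbb I_K\ne\emptyset,t\le1$, $(C,\langle P_1..P_t\rangle)$ if $k\ge2,\mathbb I_K=\emptyset$, $(C,\langle\mathbb I_K,\mathbb I_K,P_1..P_t\rangle)$ if $k\ge2,\mathbb I_K\ne\emptyset,t\ge2$. For general $K$, $\mathbb I_K$ is the repeated-index set of $\mathrm{pur}(K)$ and $\mathrm{can}(\mathrm{pur}(K))$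 is written $(C,\langle\mathbb I_K,\mathbb I_K,P_i,1\le i\le t\rangle)$ (copies of $\mathbb I_K$ omitted if empty; degenerate $K$ has $\mathbb I_K=\emptyset$, $t\in\{0,1\}$). $P=\bigcup_iP_i$, $S=C\cup P$. $R_K^{K'}$: with $\mathrm{can}(\mathrm{pur}(K'))=(C',\langle\mathbb I_{K'},\mathbb I_{K'},P'_j,1\le j\le s\rangle)$, $D=\mathbb I_{K'}\setminus\mathbb I_K$ and $T_1,\dots,T_u$ the nonempty sets among $P'_j\setminus\mathbb I_K$: $R_K^{K'}=(\cdot,\langle\ \rangle)$ if $D=\emptyset,u\le1$; $(C'\setminus\mathbb I_K,\langle T_1..T_u\rangle)$ if $D=\emptyset,u\ge2$; $(C'\setminus\mathbb I_K,\langle D,D\rangle)$ if $D\ne\emptyset,u\le1$; $(C'\setminus\mathbb I_K,\langle D,D,T_1..T_u\rangle)$ if $D\ne\emptyset,u\ge2$. Sub-CMI: with $K''=R_K^{K'}$, $\mathrm{can}(\mathrm{pur}(K''))=(C'',\langle\mathbb I_{K''},\mathbb I_{K''},P''_j,1\le j\le r\rangle)$, $P''=\bigcup_jP''_j$, $K'$ is a sub-CMI of $K$ if: (i) $K'=(\cdot,\langle\ \rangle)$; or (ii) $\mathrm{can}(\mathrm{pur}(K''))=(\cdot,\langle\ \rangle)$ and $C\subseteq C'$; or (iii) $\mathrm{can}(\mathrm{pur}(K''))\ne(\cdot,\langle\ \rangle)$, $\mathbb I_{K''}=\emptyset$, $P''\subseteq P$, $C\subseteq C''\subseteq S\setminus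 P''$, and whenever $m_1\in P''_{j_1}$, $m_2\in P''_{j_2}$ with $j_1\ne j_2$, then $m_1\in P_{i_1}$, $m_2\in P_{i_2}$ with $i_1\ne i_2$. *)

theory Defs
  imports "HOL-Probability.Probability" "HOL-Library.Multiset"
begin

text \<open>A joint distribution: a probability mass function M on a sample space 'w,
  random variables X i :: 'w => 'v (i in {1..n}).  Entropy in bits.\<close>

definition ent :: "'w pmf \<Rightarrow> ('w \<Rightarrow> 'b) \<Rightarrow> real" where
  "ent M Y = infsum (\<lambda>y. - pmf (map_pmf Y M) y * log 2 (pmf (map_pmf Y M) y)) UNIV"

definition ent_finite :: "'w pmf \<Rightarrow> ('w \<Rightarrow> 'b) \<Rightarrow> bool" where
  "ent_finite M Y \<longleftrightarrow> (\<lambda>y. - pmf (map_pmf Y M) y * log 2 (pmf (map_pmf Y M) y)) summable_on UNIV"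

definition jointRV :: "(nat \<Rightarrow> 'w \<Rightarrow> 'v) \<Rightarrow> nat set \<Rightarrow> 'w \<Rightarrow> (nat \<Rightarrow> 'v)" where
  "jointRV X A w = restrict (\<lambda>i. X i w) A"

definition H :: "'w pmf \<Rightarrow> (nat \<Rightarrow> 'w \<Rightarrow> 'v) \<Rightarrow> nat set \<Rightarrow> real" where
  "H M X A = ent M (jointRV X A)"

definition condH :: "'w pmf \<Rightarrow> (nat \<Rightarrow> 'w \<Rightarrow> 'v) \<Rightarrow> nat set \<Rightarrow> nat set \<Rightarrow> real" where
  "condH M X A C = H M X (A \<union> C) - H M X C"

definition finite_entropies :: "nat \<Rightarrow> 'w pmf \<Rightarrow> (nat \<Rightarrow> 'w \<Rightarrow> 'v) \<Rightarrow> bool" where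
  "finite_entropies n M X \<longleftrightarrow> (\<forall>i\<in>{1..n}. ent_finite M (X i))"

text \<open>A CMI (C, <Q_1,...,Q_k>): a set C and a multiset of sets.\<close>
type_synonym cmi = "nat set \<times> nat set multiset"

definition wf_cmi :: "nat \<Rightarrow> cmi \<Rightarrow> bool" where
  "wf_cmi n K \<longleftrightarrow> fst K \<subseteq> {1..n} \<and> (\<forall>Q\<in>#snd K. Q \<subseteq> {1..n})"

text \<open>Validity: sum_i H(X_{Q_i}|X_C) - H(X_{Q_1},...,X_{Q_k}|X_C) = 0; the tuple
  (X_{Q_1},...,X_{Q_k}) is identified with X_{Q_1 \<union> ... \<union> Q_k}.\<close>
definition valid :: "'w pmf \<Rightarrow> (nat \<Rightarrow> 'w \<Rightarrow> 'v) \<Rightarrow> cmi \<Rightarrow> bool" where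
  "valid M X K \<longleftrightarrow>
     (\<Sum>Q\<in>#snd K. condH M X Q (fst K)) - condH M X (\<Union>(set_mset (snd K))) (fst K) = 0"

text \<open>Every
  discrete (countably supported) distribution is, up to injective relabelling of
  outcomes and values, a distribution on sample space nat with nat-valued variables.\<close>
definition degenerate :: "nat \<Rightarrow> cmi \<Rightarrow> bool" where
  "degenerate n K \<longleftrightarrow>
     (\<forall>(M :: nat pmf) (X :: nat \<Rightarrow> nat \<Rightarrow> nat). finite_entropies n M X \<longrightarrow> valid M X K)"

definition pur :: "cmi \<Rightarrow> cmi" where
  "pur K = (fst K, filter_mset (\<lambda>Q. Q \<noteq> {}) (image_mset (\<lambda>Q. Q - fst K) (snd K)))"

definition rep_idx :: "nat set multiset \<Rightarrow> nat set" where
  "rep_idx Qs = {i. 2 \<le> size (filter_mset (\<lambda>Q. i \<in> Q) Qs)}"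

definition parts :: "nat set \<Rightarrow> nat set multiset \<Rightarrow> nat set multiset" where
  "parts I Qs = filter_mset (\<lambda>P. P \<noteq> {}) (image_mset (\<lambda>Q. Q - I) Qs)"

text \<open>Canonical form of a pure CMI: None stands for the degenerate class (.,<>);
  Some (C, I, Ps) stands for (C, <I, I, P_1, ..., P_t>) (copies of I omitted if I is empty).\<close>
definition can_pure :: "cmi \<Rightarrow> (nat set \<times> nat set \<times> nat set multiset) option" where
  "can_pure K = (let C = fst K; Qs = snd K; I = rep_idx Qs; Ps = parts I Qs in
     if size Qs \<le> 1 then None
     else if I \<noteq> {} \<and> size Ps \<le> 1 then Some (C, I, {#})
     else Some (C, I, Ps))"

definition canK :: "cmi \<Rightarrow> (nat set \<times> nat set \<times> nat set multiset) option" where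
  "canK K = can_pure (pur K)"

definition IK :: "cmi \<Rightarrow> nat set" where
  "IK K = rep_idx (snd (pur K))"

text \<open>The P_i of K: those of can(pur(K)); for degenerate K (I_K empty, t in {0,1})
  the nonempty members of pur(K).\<close>
definition PK :: "cmi \<Rightarrow> nat set multiset" where
  "PK K = (case canK K of None \<Rightarrow> snd (pur K) | Some (_, _, Ps) \<Rightarrow> Ps)"

definition degCMI :: cmi where "degCMI = ({}, {#})"

definition RK :: "cmi \<Rightarrow> cmi \<Rightarrow> cmi" where
  "RK K K' = (let D = IK K' - IK K;
                  Ts = filter_mset (\<lambda>T. T \<noteq> {}) (image_mset (\<lambda>P. P - IK K) (PK K'));
                  C0 = fst K' - IK K in
     if D = {} \<and> size Ts \<le> 1 then degCMI
     else if D = {} then (C0, Ts)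
     else if size Ts \<le> 1 then (C0, {#D, D#})
     else (C0, {#D, D#} + Ts))"

definition sub_cmi :: "nat \<Rightarrow> cmi \<Rightarrow> cmi \<Rightarrow> bool" where
  "sub_cmi n K' K \<longleftrightarrow>
     degenerate n K' \<or>
     (let K'' = RK K K'; C = fst K; P = \<Union>(set_mset (PK K)); S = C \<union> P;
          C'' = fst K''; P'' = \<Union>(set_mset (PK K'')) in
       (canK K'' = None \<and> C \<subseteq> fst K') \<or>
       (canK K'' \<noteq> None \<and> IK K'' = {} \<and> P'' \<subseteq> P \<and> C \<subseteq> C'' \<and> C'' \<subseteq> S - P'' \<and>
        (\<forall>A B m1 m2. {#A, B#} \<subseteq># PK K'' \<longrightarrow> m1 \<in> A \<longrightarrow> m2 \<in> B \<longrightarrow>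
            (\<exists>A' B'. {#A', B'#} \<subseteq># PK K \<and> m1 \<in> A' \<and> m2 \<in> B'))))"

end

theory Submission
  imports Defs
begin


definition lp :: "'w pmf \<Rightarrow> ('w \<Rightarrow> 'b) \<Rightarrow> 'w \<Rightarrow> real" where
  "lp M Y \<omega> = - log 2 (pmf (map_pmf Y M) (Y \<omega>))"

lemma neglog_nonneg: "0 \<le> (x::real) \<Longrightarrow> x \<le> 1 \<Longrightarrow> 0 \<le> - log 2 x"
  by (cases "x = 0") (auto simp: log_def divide_nonpos_pos)

lemma lp_nonneg: "0 \<le> lp M Y \<omega>"
  unfolding lp_def by (rule neglog_nonneg) (auto simp: pmf_le_1)

lemma pmf_integral_infsum:
  fixes p :: "'a pmf" and f :: "'a \<Rightarrow> real"
  assumes "\<And>x. 0 \<le> f x"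
  shows "integrable p f \<longleftrightarrow> (\<lambda>x. pmf p x * f x) summable_on UNIV"
    and "integral\<^sup>L p f = infsum (\<lambda>x. pmf p x * f x) UNIV"
proof -
  have i1: "integrable p f \<longleftrightarrow> integrable (count_space UNIV) (\<lambda>x. pmf p x * f x)"
    unfolding measure_pmf_eq_density by (subst integrable_density) auto
  have nn: "\<And>x. norm (pmf p x * f x) = pmf p x * f x" using assms by auto
  have i2: "integrable (count_space UNIV) (\<lambda>x. pmf p x * f x) \<longleftrightarrow> (\<lambda>x. pmf p x * f x) summable_on UNIV"
    using abs_summable_equivalent[of "\<lambda>x. pmf p x * f x" UNIV] nn
    by (simp add: abs_summable_on_def)
  show "integrable p f \<longleftrightarrow> (\<lambda>x. pmf p x * f x) summable_on UNIV" using i1 i2 by simp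
  have e1: "integral\<^sup>L p f = integral\<^sup>L (count_space UNIV) (\<lambda>x. pmf p x * f x)"
    unfolding measure_pmf_eq_density by (subst integral_density) auto
  show "integral\<^sup>L p f = infsum (\<lambda>x. pmf p x * f x) UNIV"
  proof (cases "(\<lambda>x. pmf p x * f x) summable_on UNIV")
    case True
    then have "Infinite_Set_Sum.abs_summable_on (\<lambda>x. pmf p x * f x) UNIV"
      using abs_summable_equivalent[of "\<lambda>x. pmf p x * f x" UNIV] nn by simp
    then show ?thesis using e1 infsetsum_infsum[of "\<lambda>x. pmf p x * f x" UNIV]
      by (simp add: infsetsum_def)
  next
    case False
    then show ?thesis using e1 i2 by (simp add: infsum_not_exists not_integrable_integral_eq)
  qed
qed

lemma ent_integral:
  shows "ent_finite M Y \<longleftrightarrow> integrable M (lp M Y)"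
    and "ent M Y = integral\<^sup>L M (lp M Y)"
proof -
  let ?p = "map_pmf Y M"
  let ?f = "\<lambda>y. - log 2 (pmf ?p y)"
  have f0: "\<And>y. 0 \<le> ?f y" by (rule neglog_nonneg) (auto simp: pmf_le_1)
  have a: "integrable M (lp M Y) \<longleftrightarrow> integrable ?p ?f"
    by (simp add: lp_def[abs_def])
  have b: "integral\<^sup>L M (lp M Y) = integral\<^sup>L ?p ?f"
    by (simp add: lp_def[abs_def])
  show "ent_finite M Y \<longleftrightarrow> integrable M (lp M Y)"
    unfolding a pmf_integral_infsum(1)[OF f0] ent_finite_def by simp
  show "ent M Y = integral\<^sup>L M (lp M Y)"
    unfolding b pmf_integral_infsum(2)[OF f0] ent_def by simp
qed


lemma lp_inv:
  assumes "\<omega> \<in> set_pmf M" "\<And>\<omega>. \<omega> \<in> set_pmf M \<Longrightarrow> U \<omega> = f (V \<omega>)" "inj_on f (V ` set_pmf M)"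
  shows "lp M U \<omega> = lp M V \<omega>"
proof -
  have "map_pmf U M = map_pmf f (map_pmf V M)"
    unfolding map_pmf_comp using assms(2) by (intro map_pmf_cong) auto
  then show ?thesis unfolding lp_def using assms
    by (simp add: pmf_map_inj)
qed

lemma ent_inv:
  assumes "\<And>\<omega>. \<omega> \<in> set_pmf M \<Longrightarrow> U \<omega> = f (V \<omega>)" "inj_on f (V ` set_pmf M)"
  shows "ent M U = ent M V" "ent_finite M U \<longleftrightarrow> ent_finite M V"
proof -
  have ae: "AE \<omega> in M. lp M U \<omega> = lp M V \<omega>"
    unfolding AE_measure_pmf_iff using lp_inv[OF _ assms] by blast
  show "ent M U = ent M V" unfolding ent_integral by (rule integral_cong_AE) (use ae in auto)
  show "ent_finite M U \<longleftrightarrow> ent_finite M V" unfolding ent_integral by (rule integrable_cong_AE) (use ae in auto)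
qed

lemma pmf_pair_sum_le:
  assumes "finite F"
  shows "(\<Sum>y\<in>F. pmf (map_pmf (\<lambda>\<omega>. (Y \<omega>, W \<omega>)) M) (y,w)) \<le> pmf (map_pmf W M) w"
proof -
  let ?p = "map_pmf (\<lambda>\<omega>. (Y \<omega>, W \<omega>)) M"
  have "(\<Sum>y\<in>F. pmf ?p (y,w)) = sum (pmf ?p) ((\<lambda>y. (y,w)) ` F)"
    by (subst sum.reindex) (auto simp: inj_on_def)
  also have "\<dots> = measure ?p ((\<lambda>y. (y,w)) ` F)"
    using assms by (subst measure_measure_pmf_finite) auto
  also have "\<dots> \<le> measure ?p (UNIV \<times> {w})"
    by (rule measure_pmf.finite_measure_mono) auto
  also have "\<dots> = measure M (W -` {w})"
    by (simp add: vimage_def)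
  also have "\<dots> = pmf (map_pmf W M) w" by (simp add: pmf_map)
  finally show ?thesis .
qed

lemma sum_pmf_le1: "finite F \<Longrightarrow> sum (pmf p) F \<le> 1"
  by (metis measure_measure_pmf_finite measure_pmf.prob_le_1)

lemma rsum_le1:
  fixes M :: "'w pmf" and Y :: "'w \<Rightarrow> 'a" and Z :: "'w \<Rightarrow> 'b" and W :: "'w \<Rightarrow> 'c"
  defines "r \<equiv> \<lambda>(y,z,w). pmf (map_pmf (\<lambda>\<omega>. (Y \<omega>, W \<omega>)) M) (y,w) * pmf (map_pmf (\<lambda>\<omega>. (Z \<omega>, W \<omega>)) M) (z,w) / pmf (map_pmf W M) w"
  assumes "finite F"
  shows "sum r F \<le> 1"
proof -
  let ?b = "pmf (map_pmf (\<lambda>\<omega>. (Y \<omega>, W \<omega>)) M)"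
  let ?c = "pmf (map_pmf (\<lambda>\<omega>. (Z \<omega>, W \<omega>)) M)"
  let ?d = "pmf (map_pmf W M)"
  define Fy where "Fy = fst ` F"
  define Fz where "Fz = fst ` snd ` F"
  define Fw where "Fw = snd ` snd ` F"
  have fin: "finite Fy" "finite Fz" "finite Fw" using assms by (auto simp: Fy_def Fz_def Fw_def)
  have r0: "\<And>x. 0 \<le> r x" unfolding r_def by auto
  have sub: "F \<subseteq> Fy \<times> Fz \<times> Fw" unfolding Fy_def Fz_def Fw_def by force
  have "sum r F \<le> sum r (Fy \<times> Fz \<times> Fw)"
    by (rule sum_mono2) (use fin sub r0 in auto)
  also have "\<dots> = (\<Sum>y\<in>Fy. \<Sum>z\<in>Fz. \<Sum>w\<in>Fw. r (y,z,w))"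
    by (simp add: sum.cartesian_product)
  also have "\<dots> = (\<Sum>w\<in>Fw. \<Sum>y\<in>Fy. \<Sum>z\<in>Fz. r (y,z,w))"
    by (subst sum.swap) (subst (2) sum.swap, rule refl)
  also have "\<dots> = (\<Sum>w\<in>Fw. (\<Sum>y\<in>Fy. ?b (y,w)) * (\<Sum>z\<in>Fz. ?c (z,w)) / ?d w)"
    by (simp add: r_def sum_product sum_divide_distrib)
  also have "\<dots> \<le> (\<Sum>w\<in>Fw. ?d w)"
  proof (rule sum_mono)
    fix w
    have b: "(\<Sum>y\<in>Fy. ?b (y,w)) \<le> ?d w" by (rule pmf_pair_sum_le[OF fin(1)])
    have c: "(\<Sum>z\<in>Fz. ?c (z,w)) \<le> ?d w" by (rule pmf_pair_sum_le[OF fin(2)])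
    have b0: "0 \<le> (\<Sum>y\<in>Fy. ?b (y,w))" by (simp add: sum_nonneg)
    have c0: "0 \<le> (\<Sum>z\<in>Fz. ?c (z,w))" by (simp add: sum_nonneg)
    show "(\<Sum>y\<in>Fy. ?b (y,w)) * (\<Sum>z\<in>Fz. ?c (z,w)) / ?d w \<le> ?d w"
    proof (cases "?d w = 0")
      case True then show ?thesis by simp
    next
      case False
      then have "?d w > 0" by (simp add: order_less_le)
      moreover have "(\<Sum>y\<in>Fy. ?b (y,w)) * (\<Sum>z\<in>Fz. ?c (z,w)) \<le> ?d w * ?d w"
        using b c b0 c0 by (intro mult_mono) auto
      ultimately show ?thesis by (simp add: divide_le_eq)
    qed
  qed
  also have "\<dots> \<le> 1" by (rule sum_pmf_le1[OF fin(3)])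
  finally show ?thesis .
qed


lemma mult_div_cancel_aux: "(a::real) \<noteq> 0 \<Longrightarrow> a * (u / (a * v)) = u / v"
  by (cases "v = 0") (simp_all add: field_simps)

lemma log2_le_minus_one: "0 < (x::real) \<Longrightarrow> log 2 x \<le> (x - 1) / ln 2"
  unfolding log_def by (intro divide_right_mono ln_le_minus_one) auto

lemma gibbs:
  fixes M :: "'w pmf" and Y :: "'w \<Rightarrow> 'a" and Z :: "'w \<Rightarrow> 'b" and W :: "'w \<Rightarrow> 'c"
  assumes iB: "integrable M (lp M (\<lambda>\<omega>. (Y \<omega>, W \<omega>)))"
    and iC: "integrable M (lp M (\<lambda>\<omega>. (Z \<omega>, W \<omega>)))"
    and iD: "integrable M (lp M W)"
  shows "integrable M (lp M (\<lambda>\<omega>. (Y \<omega>, Z \<omega>, W \<omega>)))"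
    and "integral\<^sup>L M (lp M (\<lambda>\<omega>. (Y \<omega>, Z \<omega>, W \<omega>))) + integral\<^sup>L M (lp M W)
         \<le> integral\<^sup>L M (lp M (\<lambda>\<omega>. (Y \<omega>, W \<omega>))) + integral\<^sup>L M (lp M (\<lambda>\<omega>. (Z \<omega>, W \<omega>)))"
proof -
  define J where "J = map_pmf (\<lambda>\<omega>. (Y \<omega>, Z \<omega>, W \<omega>)) M"
  define pb where "pb = pmf (map_pmf (\<lambda>\<omega>. (Y \<omega>, W \<omega>)) M)"
  define pc where "pc = pmf (map_pmf (\<lambda>\<omega>. (Z \<omega>, W \<omega>)) M)"
  define pd where "pd = pmf (map_pmf W M)"
  define g where "g = (\<lambda>(y,z,w). pb (y,w) * pc (z,w) / (pmf J (y,z,w) * pd w))"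
  define r where "r = (\<lambda>(y,z,w). pb (y,w) * pc (z,w) / pd w)"
  define q where "q = (\<lambda>\<omega>. g (Y \<omega>, Z \<omega>, W \<omega>))"
  let ?A = "lp M (\<lambda>\<omega>. (Y \<omega>, Z \<omega>, W \<omega>))"
  let ?B = "lp M (\<lambda>\<omega>. (Y \<omega>, W \<omega>))"
  let ?C = "lp M (\<lambda>\<omega>. (Z \<omega>, W \<omega>))"
  let ?D = "lp M W"
  have r0: "\<And>x. 0 \<le> r x" unfolding r_def pb_def pc_def pd_def by auto
  have g0: "\<And>x. 0 \<le> g x" unfolding g_def pb_def pc_def pd_def by auto
  have rfin: "\<And>F. finite F \<Longrightarrow> sum r F \<le> 1"
    unfolding r_def pb_def pc_def pd_def by (rule rsum_le1)
  have rs: "r summable_on UNIV"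
    by (rule nonneg_bdd_above_summable_on) (use r0 rfin in \<open>auto simp: bdd_above_def\<close>)
  have rinf: "infsum r UNIV \<le> 1"
    by (rule infsum_le_finite_sums[OF rs]) (use rfin in auto)
  have gr: "\<And>x. pmf J x * g x \<le> r x"
  proof -
    fix x :: "'a \<times> 'b \<times> 'c"
    obtain y z w where x: "x = (y,z,w)" by (cases x) auto
    show "pmf J x * g x \<le> r x"
    proof (cases "pmf J x = 0")
      case True then show ?thesis using r0 by simp
    next
      case False then show ?thesis unfolding x g_def r_def
        using mult_div_cancel_aux[of "pmf J (y,z,w)" "pb (y,w) * pc (z,w)" "pd w"] x by simp
    qed
  qed
  have gs: "(\<lambda>x. pmf J x * g x) summable_on UNIV"
    by (rule summable_on_comparison_test[OF rs]) (use gr g0 in auto)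
  have qint: "integrable M q"
  proof -
    have "integrable J g" using pmf_integral_infsum(1)[of g J] g0 gs by simp
    then show ?thesis unfolding J_def q_def by simp
  qed
  have qle: "integral\<^sup>L M q \<le> 1"
  proof -
    have "integral\<^sup>L M q = integral\<^sup>L J g" unfolding J_def q_def by simp
    also have "\<dots> = infsum (\<lambda>x. pmf J x * g x) UNIV" using pmf_integral_infsum(2)[of g J] g0 by simp
    also have "\<dots> \<le> infsum r UNIV" by (rule infsum_mono[OF gs rs]) (use gr in auto)
    finally show ?thesis using rinf by simp
  qed
  have q0: "\<And>\<omega>. 0 \<le> q \<omega>" using g0 unfolding q_def by simp
  have pw: "?A \<omega> \<le> ?B \<omega> + ?C \<omega> - ?D \<omega> + (q \<omega> - 1) / ln 2" if \<omega>: "\<omega> \<in> set_pmf M" for \<omega>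
  proof -
    define a where "a = pmf J (Y \<omega>, Z \<omega>, W \<omega>)"
    define b where "b = pb (Y \<omega>, W \<omega>)"
    define c where "c = pc (Z \<omega>, W \<omega>)"
    define d where "d = pd (W \<omega>)"
    have a: "a > 0" unfolding a_def J_def using \<omega> by (intro pmf_positive) auto
    have b: "b > 0" unfolding b_def pb_def using \<omega> by (intro pmf_positive) auto
    have c: "c > 0" unfolding c_def pc_def using \<omega> by (intro pmf_positive) auto
    have d: "d > 0" unfolding d_def pd_def using \<omega> by (intro pmf_positive) auto
    have qw: "q \<omega> = b * c / (a * d)" unfolding q_def g_def a_def b_def c_def d_def by simp
    have "log 2 (q \<omega>) = log 2 b + log 2 c - log 2 a - log 2 d"
      unfolding qw using a b c d by (simp add: log_mult log_divide)
    moreover have "log 2 (q \<omega>) \<le> (q \<omega> - 1) / ln 2"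
      using a b c d qw by (intro log2_le_minus_one) simp
    moreover have "?A \<omega> = - log 2 a" "?B \<omega> = - log 2 b" "?C \<omega> = - log 2 c" "?D \<omega> = - log 2 d"
      unfolding lp_def a_def b_def c_def d_def J_def pb_def pc_def pd_def by simp_all
    ultimately show ?thesis by linarith
  qed
  have ln2: "ln (2::real) > 0" by simp
  have pw2: "?A \<omega> \<le> ?B \<omega> + ?C \<omega> + q \<omega> / ln 2" if \<omega>: "\<omega> \<in> set_pmf M" for \<omega>
  proof -
    have "(q \<omega> - 1) / ln 2 \<le> q \<omega> / ln 2" using ln2 by (intro divide_right_mono) auto
    then show ?thesis using pw[OF \<omega>] lp_nonneg[of M W \<omega>] by linarith
  qed
  have intA: "integrable M ?A"
  proof (rule Bochner_Integration.integrable_bound[where f = "\<lambda>\<omega>. ?B \<omega> + ?C \<omega> + q \<omega> / ln 2"])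
    show "integrable M (\<lambda>\<omega>. ?B \<omega> + ?C \<omega> + q \<omega> / ln 2)"
      using iB iC qint by auto
    show "?A \<in> borel_measurable M" by simp
    show "AE \<omega> in M. norm (?A \<omega>) \<le> norm (?B \<omega> + ?C \<omega> + q \<omega> / ln 2)"
      unfolding AE_measure_pmf_iff
    proof
      fix \<omega> assume \<omega>: "\<omega> \<in> set_pmf M"
      have "0 \<le> ?B \<omega> + ?C \<omega> + q \<omega> / ln 2" using q0[of \<omega>] ln2
        by (intro add_nonneg_nonneg divide_nonneg_pos lp_nonneg) auto
      then show "norm (?A \<omega>) \<le> norm (?B \<omega> + ?C \<omega> + q \<omega> / ln 2)"
        using pw2[OF \<omega>] lp_nonneg[of M "\<lambda>\<omega>. (Y \<omega>, Z \<omega>, W \<omega>)" \<omega>] by simp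
    qed
  qed
  then show "integrable M ?A" .
  have "integral\<^sup>L M ?A \<le> integral\<^sup>L M (\<lambda>\<omega>. ?B \<omega> + ?C \<omega> - ?D \<omega> + (q \<omega> / ln 2 - 1 / ln 2))"
    by (rule integral_mono_AE) (use intA iB iC iD qint pw in \<open>auto simp: AE_measure_pmf_iff diff_divide_distrib\<close>)
  also have "\<dots> = integral\<^sup>L M ?B + integral\<^sup>L M ?C - integral\<^sup>L M ?D + (integral\<^sup>L M q / ln 2 - 1 / ln 2)"
    using iB iC iD qint by (simp add: measure_pmf.prob_space)
  also have "\<dots> \<le> integral\<^sup>L M ?B + integral\<^sup>L M ?C - integral\<^sup>L M ?D"
    using qle ln2 by (simp add: divide_right_mono)
  finally show "integral\<^sup>L M ?A + integral\<^sup>L M ?D \<le> integral\<^sup>L M ?B + integral\<^sup>L M ?C" by simp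
qed


lemma restrict_jointRV: "A \<subseteq> B \<Longrightarrow> restrict (jointRV X B \<omega>) A = jointRV X A \<omega>"
  by (auto simp: jointRV_def restrict_def fun_eq_iff)

lemma jointRV_ext: "jointRV X A \<omega> \<in> extensional A"
  by (simp add: jointRV_def)

lemma inj_restrict3: "inj_on (\<lambda>t. (restrict t A, restrict t B, restrict t C)) (extensional (A \<union> B \<union> C))"
proof (rule inj_onI)
  fix s t assume s: "s \<in> extensional (A \<union> B \<union> C)" and t: "t \<in> extensional (A \<union> B \<union> C)"
    and e: "(restrict s A, restrict s B, restrict s C) = (restrict t A, restrict t B, restrict t C)"
  show "s = t"
  proof
    fix x
    show "s x = t x"
    proof (cases "x \<in> A \<union> B \<union> C")
      case True then show ?thesis using e by (auto simp: fun_eq_iff restrict_def split: if_splits)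
    next
      case False then show ?thesis using s t by (simp add: extensional_def)
    qed
  qed
qed

lemma inj_restrict2: "inj_on (\<lambda>t. (restrict t A, restrict t C)) (extensional (A \<union> C))"
proof (rule inj_onI)
  fix s t assume s: "s \<in> extensional (A \<union> C)" and t: "t \<in> extensional (A \<union> C)"
    and e: "(restrict s A, restrict s C) = (restrict t A, restrict t C)"
  show "s = t"
  proof
    fix x
    show "s x = t x"
    proof (cases "x \<in> A \<union> C")
      case True then show ?thesis using e by (auto simp: fun_eq_iff restrict_def split: if_splits)
    next
      case False then show ?thesis using s t by (simp add: extensional_def)
    qed
  qed
qed

lemma lp_cong_int:
  assumes "\<And>\<omega>. \<omega> \<in> set_pmf M \<Longrightarrow> f \<omega> = g \<omega>"
  shows "integrable M f \<longleftrightarrow> integrable M g" "integral\<^sup>L M f = integral\<^sup>L M g"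
proof -
  have ae: "AE \<omega> in M. f \<omega> = g \<omega>" unfolding AE_measure_pmf_iff using assms by blast
  show "integrable M f \<longleftrightarrow> integrable M g" by (rule integrable_cong_AE) (use ae in auto)
  show "integral\<^sup>L M f = integral\<^sup>L M g" by (rule integral_cong_AE) (use ae in auto)
qed

lemma lp_pair:
  assumes "\<omega> \<in> set_pmf M"
  shows "lp M (\<lambda>\<omega>. (jointRV X A \<omega>, jointRV X C \<omega>)) \<omega> = lp M (jointRV X (A \<union> C)) \<omega>"
proof (rule lp_inv[OF assms, where f = "\<lambda>t. (restrict t A, restrict t C)"])
  show "\<And>\<omega>. \<omega> \<in> set_pmf M \<Longrightarrow> (jointRV X A \<omega>, jointRV X C \<omega>) = (restrict (jointRV X (A \<union> C) \<omega>) A, restrict (jointRV X (A \<union> C) \<omega>) C)"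
    by (simp add: restrict_jointRV)
  show "inj_on (\<lambda>t. (restrict t A, restrict t C)) (jointRV X (A \<union> C) ` set_pmf M)"
    by (rule inj_on_subset[OF inj_restrict2]) (auto simp: jointRV_ext)
qed

lemma lp_triple:
  assumes "\<omega> \<in> set_pmf M"
  shows "lp M (\<lambda>\<omega>. (jointRV X A \<omega>, jointRV X B \<omega>, jointRV X C \<omega>)) \<omega> = lp M (jointRV X (A \<union> B \<union> C)) \<omega>"
proof (rule lp_inv[OF assms, where f = "\<lambda>t. (restrict t A, restrict t B, restrict t C)"])
  show "\<And>\<omega>. \<omega> \<in> set_pmf M \<Longrightarrow> (jointRV X A \<omega>, jointRV X B \<omega>, jointRV X C \<omega>) = (restrict (jointRV X (A \<union> B \<union> C) \<omega>) A, restrict (jointRV X (A \<union> B \<union> C) \<omega>) B, restrict (jointRV X (A \<union> B \<union> C) \<omega>) C)"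
    by (simp add: jointRV_def restrict_def fun_eq_iff)
  show "inj_on (\<lambda>t. (restrict t A, restrict t B, restrict t C)) (jointRV X (A \<union> B \<union> C) ` set_pmf M)"
    by (rule inj_on_subset[OF inj_restrict3]) (auto simp: jointRV_ext)
qed

lemma H_sub:
  assumes "ent_finite M (jointRV X (A \<union> C))" "ent_finite M (jointRV X (B \<union> C))" "ent_finite M (jointRV X C)"
  shows "ent_finite M (jointRV X (A \<union> B \<union> C))"
    and "H M X (A \<union> B \<union> C) + H M X C \<le> H M X (A \<union> C) + H M X (B \<union> C)"
proof -
  note g = gibbs[of M "jointRV X A" "jointRV X C" "jointRV X B"]
  have e1: "integrable M (lp M (\<lambda>\<omega>. (jointRV X A \<omega>, jointRV X C \<omega>))) \<longleftrightarrow> integrable M (lp M (jointRV X (A \<union> C)))"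
           "integral\<^sup>L M (lp M (\<lambda>\<omega>. (jointRV X A \<omega>, jointRV X C \<omega>))) = integral\<^sup>L M (lp M (jointRV X (A \<union> C)))"
    by (rule lp_cong_int, rule lp_pair, assumption)+
  have e2: "integrable M (lp M (\<lambda>\<omega>. (jointRV X B \<omega>, jointRV X C \<omega>))) \<longleftrightarrow> integrable M (lp M (jointRV X (B \<union> C)))"
           "integral\<^sup>L M (lp M (\<lambda>\<omega>. (jointRV X B \<omega>, jointRV X C \<omega>))) = integral\<^sup>L M (lp M (jointRV X (B \<union> C)))"
    by (rule lp_cong_int, rule lp_pair, assumption)+
  have e3: "integrable M (lp M (\<lambda>\<omega>. (jointRV X A \<omega>, jointRV X B \<omega>, jointRV X C \<omega>))) \<longleftrightarrow> integrable M (lp M (jointRV X (A \<union> B \<union> C)))"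
           "integral\<^sup>L M (lp M (\<lambda>\<omega>. (jointRV X A \<omega>, jointRV X B \<omega>, jointRV X C \<omega>))) = integral\<^sup>L M (lp M (jointRV X (A \<union> B \<union> C)))"
    by (rule lp_cong_int, rule lp_triple, assumption)+
  have i: "integrable M (lp M (\<lambda>\<omega>. (jointRV X A \<omega>, jointRV X C \<omega>)))"
          "integrable M (lp M (\<lambda>\<omega>. (jointRV X B \<omega>, jointRV X C \<omega>)))"
          "integrable M (lp M (jointRV X C))"
    using assms e1 e2 by (simp_all add: ent_integral)
  show "ent_finite M (jointRV X (A \<union> B \<union> C))"
    using gibbs(1)[OF i] e3 by (simp add: ent_integral)
  show "H M X (A \<union> B \<union> C) + H M X C \<le> H M X (A \<union> C) + H M X (B \<union> C)"
    using gibbs(2)[OF i] e1 e2 e3 by (simp add: H_def ent_integral)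
qed


locale poly =
  fixes g :: "nat set \<Rightarrow> real"
  assumes gmono: "A \<subseteq> B \<Longrightarrow> g A \<le> g B"
    and gsub: "g (A \<union> B \<union> C) + g C \<le> g (A \<union> C) + g (B \<union> C)"
begin

definition ci :: "nat set \<Rightarrow> nat set \<Rightarrow> nat set \<Rightarrow> real" where
  "ci A B C = g (A \<union> C) + g (B \<union> C) - g (A \<union> B \<union> C) - g C"

definition tc :: "nat set \<Rightarrow> nat set multiset \<Rightarrow> real" where
  "tc C Qs = (\<Sum>Q\<in>#Qs. g (Q \<union> C) - g C) - (g (\<Union>(set_mset Qs) \<union> C) - g C)"

lemma ci_nonneg: "0 \<le> ci A B C"
  using gsub[of A B C] by (simp add: ci_def)

lemma ci_sym: "ci A B C = ci B A C"
  by (simp add: ci_def Un_ac)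

lemma ci_mono1: "A' \<subseteq> A \<Longrightarrow> ci A' B C \<le> ci A B C"
proof -
  assume a: "A' \<subseteq> A"
  have "g (A \<union> B \<union> (A' \<union> C)) + g (A' \<union> C) \<le> g (A \<union> (A' \<union> C)) + g (B \<union> (A' \<union> C))"
    by (rule gsub)
  moreover have "A \<union> B \<union> (A' \<union> C) = A \<union> B \<union> C" "A \<union> (A' \<union> C) = A \<union> C" "B \<union> (A' \<union> C) = A' \<union> B \<union> C"
    using a by auto
  ultimately show ?thesis by (simp add: ci_def)
qed

lemma ci_mono: "A' \<subseteq> A \<Longrightarrow> B' \<subseteq> B \<Longrightarrow> ci A' B' C \<le> ci A B C"
  by (metis ci_mono1 ci_sym order_trans)

lemma ci_chain: "Z \<subseteq> B \<Longrightarrow> ci A B C = ci A Z C + ci A B (Z \<union> C)"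
proof -
  assume z: "Z \<subseteq> B"
  have "B \<union> (Z \<union> C) = B \<union> C" "A \<union> B \<union> (Z \<union> C) = A \<union> B \<union> C" "A \<union> (Z \<union> C) = A \<union> Z \<union> C"
    using z by auto
  then show ?thesis by (simp add: ci_def)
qed

lemma tc_empty: "tc C {#} = 0" by (simp add: tc_def)

lemma tc_add: "tc C (add_mset Q Qs) = tc C Qs + ci Q (\<Union>(set_mset Qs)) C"
  by (simp add: tc_def ci_def Un_ac)

lemma tc_single: "tc C {#Q#} = 0" by (simp add: tc_def)

lemma tc_size1: "size Qs \<le> 1 \<Longrightarrow> tc C Qs = 0"
proof -
  assume "size Qs \<le> 1"
  then have "Qs = {#} \<or> (\<exists>Q. Qs = {#Q#})"
    by (cases Qs) (auto)
  then show ?thesis by (auto simp: tc_empty tc_single ci_def)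
qed

lemma tc_nonneg: "0 \<le> tc C Qs"
  by (induction Qs) (auto simp: tc_empty tc_add intro: add_nonneg_nonneg ci_nonneg)

lemma tc_two: "tc C {#A, B#} = ci A B C"
  by (simp add: tc_add tc_empty ci_def Un_ac)

lemma tc_img_mono:
  "(\<And>Q. Q \<in># Qs \<Longrightarrow> f Q \<subseteq> f' Q) \<Longrightarrow> tc C (image_mset f Qs) \<le> tc C (image_mset f' Qs)"
proof (induction Qs)
  case empty then show ?case by (simp add: tc_empty)
next
  case (add Q Qs)
  have "ci (f Q) (\<Union>(set_mset (image_mset f Qs))) C \<le> ci (f' Q) (\<Union>(set_mset (image_mset f' Qs))) C"
    using add.prems by (intro ci_mono) fastforce+
  then show ?case using add by (simp add: tc_add)
qed

lemma tc_subset: "Qs \<subseteq># Ps \<Longrightarrow> tc C Qs \<le> tc C Ps"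
proof -
  assume "Qs \<subseteq># Ps"
  then obtain Rs where Ps: "Ps = Qs + Rs" by (metis subset_mset.less_eqE)
  have "tc C Qs \<le> tc C (Qs + Rs)"
  proof (induction Rs)
    case empty then show ?case by simp
  next
    case (add R Rs)
    then show ?case using ci_nonneg[of R "\<Union>(set_mset (Qs + Rs))" C] by (simp add: tc_add)
  qed
  then show ?thesis using Ps by simp
qed

lemma tc_filter_empty: "tc C (filter_mset (\<lambda>Q. Q \<noteq> {}) Qs) = tc C Qs"
proof (induction Qs)
  case empty then show ?case by simp
next
  case (add Q Qs)
  show ?case
  proof (cases "Q = {}")
    case True
    have "ci {} (\<Union>(set_mset Qs)) C = 0" by (simp add: ci_def Un_ac)
    then show ?thesis using add True by (simp add: tc_add)
  next
    case False
    have "\<Union>(set_mset (filter_mset (\<lambda>Q. Q \<noteq> {}) Qs)) = \<Union>(set_mset Qs)" by auto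
    then show ?thesis using add False by (simp add: tc_add)
  qed
qed

lemma tc_group: "tc C (Xs + Ys) = tc C Xs + tc C Ys + ci (\<Union>(set_mset Xs)) (\<Union>(set_mset Ys)) C"
  by (simp add: tc_def ci_def Un_ac)

lemma det_cond: "g (C \<union> D) = g C \<Longrightarrow> g (A \<union> C \<union> D) = g (A \<union> C)"
proof -
  assume e: "g (C \<union> D) = g C"
  have "g (A \<union> D \<union> C) + g C \<le> g (A \<union> C) + g (D \<union> C)" by (rule gsub)
  moreover have "g (A \<union> C) \<le> g (A \<union> C \<union> D)" by (rule gmono) auto
  moreover have "A \<union> D \<union> C = A \<union> C \<union> D" "D \<union> C = C \<union> D" by auto
  ultimately show ?thesis using e by simp
qed

lemma det_minus: "g (C \<union> D) = g C \<Longrightarrow> g ((Q - D) \<union> C) = g (Q \<union> C)"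
proof -
  assume e: "g (C \<union> D) = g C"
  have "g (Q \<union> C) \<le> g (Q \<union> C \<union> D)" by (rule gmono) auto
  also have "Q \<union> C \<union> D = (Q - D) \<union> C \<union> D" by auto
  also have "g \<dots> = g ((Q - D) \<union> C)" using det_cond[OF e] by simp
  finally have "g (Q \<union> C) \<le> g ((Q - D) \<union> C)" .
  moreover have "g ((Q - D) \<union> C) \<le> g (Q \<union> C)" by (rule gmono) auto
  ultimately show ?thesis by simp
qed

lemma tc_det_minus: "g (C \<union> D) = g C \<Longrightarrow> tc C (image_mset (\<lambda>Q. Q - D) Qs) = tc C Qs"
proof -
  assume e: "g (C \<union> D) = g C"
  have u: "\<Union>(set_mset (image_mset (\<lambda>Q. Q - D) Qs)) = \<Union>(set_mset Qs) - D" by auto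
  have s: "(\<Sum>Q\<in>#image_mset (\<lambda>Q. Q - D) Qs. g (Q \<union> C) - g C) = (\<Sum>Q\<in>#Qs. g (Q \<union> C) - g C)"
    by (simp add: multiset.map_comp comp_def det_minus[OF e])
  show ?thesis unfolding tc_def s u det_minus[OF e] ..
qed

lemma tc_det_cond: "g (C \<union> D) = g C \<Longrightarrow> tc (C \<union> D) Qs = tc C Qs"
proof -
  assume e: "g (C \<union> D) = g C"
  have a: "\<And>A. g (A \<union> (C \<union> D)) = g (A \<union> C)" using det_cond[OF e] by (simp add: Un_assoc)
  show ?thesis unfolding tc_def a e ..
qed

lemma tc_minus_C: "tc C (image_mset (\<lambda>Q. Q - C) Qs) = tc C Qs"
proof -
  have u: "\<Union>(set_mset (image_mset (\<lambda>Q. Q - C) Qs)) \<union> C = \<Union>(set_mset Qs) \<union> C" by auto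
  have s: "\<And>Q. (Q - C) \<union> C = Q \<union> C" by auto
  show ?thesis unfolding tc_def u by (simp add: multiset.map_comp comp_def s)
qed

lemma det_set:
  assumes "finite I" "\<And>i. i \<in> I \<Longrightarrow> g (C \<union> {i}) = g C"
  shows "g (C \<union> I) = g C"
  using assms
proof (induction I rule: finite_induct)
  case empty then show ?case by simp
next
  case (insert i I)
  then have e: "g (C \<union> I) = g C" by auto
  have "g ({i} \<union> C \<union> I) = g ({i} \<union> C)" by (rule det_cond[OF e])
  moreover have "{i} \<union> C \<union> I = C \<union> insert i I" "{i} \<union> C = C \<union> {i}" by auto
  ultimately show ?case using insert by simp
qed

lemma size2_obtain:
  assumes "2 \<le> size Ms"
  obtains A B where "{#A, B#} \<subseteq># Ms"
proof -
  from assms obtain A Ms' where m: "Ms = add_mset A Ms'" by (cases Ms) auto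
  with assms obtain B Ms'' where m': "Ms' = add_mset B Ms''" by (cases Ms') auto
  have "{#A, B#} \<subseteq># Ms" unfolding m m' by simp
  then show ?thesis by (rule that)
qed

lemma rep_idx_det:
  assumes "tc C Qs = 0" "finite (rep_idx Qs)"
  shows "g (C \<union> rep_idx Qs) = g C"
proof (rule det_set[OF assms(2)])
  fix i assume "i \<in> rep_idx Qs"
  then have "2 \<le> size (filter_mset (\<lambda>Q. i \<in> Q) Qs)" by (simp add: rep_idx_def)
  then obtain A B where ab: "{#A, B#} \<subseteq># filter_mset (\<lambda>Q. i \<in> Q) Qs" by (rule size2_obtain)
  then have ab': "{#A, B#} \<subseteq># Qs" using multiset_filter_subset subset_mset.order_trans by blast
  have "A \<in># filter_mset (\<lambda>Q. i \<in> Q) Qs" "B \<in># filter_mset (\<lambda>Q. i \<in> Q) Qs"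
    using mset_subset_eqD[OF ab, of A] mset_subset_eqD[OF ab, of B] by auto
  then have iA: "i \<in> A" "i \<in> B" by auto
  have "ci {i} {i} C \<le> ci A B C" using iA by (intro ci_mono) auto
  also have "\<dots> = tc C {#A, B#}" by (simp add: tc_two)
  also have "\<dots> \<le> tc C Qs" by (rule tc_subset[OF ab'])
  finally have "ci {i} {i} C \<le> 0" using assms by simp
  moreover have "ci {i} {i} C = g ({i} \<union> C) - g C" by (simp add: ci_def)
  moreover have "g C \<le> g ({i} \<union> C)" by (rule gmono) auto
  ultimately show "g (C \<union> {i}) = g C" by (simp add: Un_commute)
qed

lemma tc_parts_zero:
  assumes "tc C Qs = 0"
  shows "tc C (parts I Qs) = 0"
proof -
  have "tc C (parts I Qs) = tc C (image_mset (\<lambda>Q. Q - I) Qs)"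
    unfolding parts_def by (rule tc_filter_empty)
  also have "\<dots> \<le> tc C (image_mset (\<lambda>Q. Q) Qs)" by (rule tc_img_mono) auto
  finally show ?thesis using assms tc_nonneg[of C "parts I Qs"] by simp
qed

lemma tc_from_parts:
  assumes "g (C \<union> I) = g C" "tc C (parts I Qs) = 0"
  shows "tc C Qs = 0"
proof -
  have "tc C Qs = tc C (image_mset (\<lambda>Q. Q - I) Qs)" by (rule tc_det_minus[OF assms(1), symmetric])
  also have "\<dots> = tc C (parts I Qs)" unfolding parts_def by (rule tc_filter_empty[symmetric])
  finally show ?thesis using assms by simp
qed

end


lemma filter_le1_eq:
  assumes "size (filter_mset \<Phi> Ps) \<le> 1" "x \<in># Ps" "y \<in># Ps" "\<Phi> x" "\<Phi> y"
  shows "x = y"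
proof (rule ccontr)
  assume ne: "x \<noteq> y"
  have "x \<in># filter_mset \<Phi> Ps" using assms by simp
  then obtain R where R: "filter_mset \<Phi> Ps = add_mset x R" by (metis multi_member_split)
  have "y \<in># filter_mset \<Phi> Ps" using assms by simp
  then have "y \<in># R" using R ne by simp
  then have "size R \<ge> 1" by (cases R) auto
  then show False using R assms(1) by simp
qed

lemma pair_sub_size2:
  assumes "{#A, B#} \<subseteq># Ps" "\<Phi> A" "\<Phi> B"
  shows "2 \<le> size (filter_mset \<Phi> Ps)"
proof -
  have "filter_mset \<Phi> {#A, B#} \<subseteq># filter_mset \<Phi> Ps" by (rule multiset_filter_mono[OF assms(1)])
  then have "size (filter_mset \<Phi> {#A, B#}) \<le> size (filter_mset \<Phi> Ps)" by (rule size_mset_mono)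
  then show ?thesis using assms by simp
qed

context poly begin

lemma tc_pairs_zero:
  "(\<And>U Rs. Us = add_mset U Rs \<Longrightarrow> ci U (\<Union>(set_mset Rs)) C = 0) \<Longrightarrow> tc C Us = 0"
proof (induction Us)
  case empty then show ?case by (simp add: tc_empty)
next
  case (add U Us)
  have h1: "ci U (\<Union>(set_mset Us)) C = 0" using add.prems by simp
  have "tc C Us = 0"
  proof (rule add.IH)
    fix V Rs assume Us: "Us = add_mset V Rs"
    have "ci V (\<Union>(set_mset (add_mset U Rs))) C = 0"
      using add.prems[of V "add_mset U Rs"] Us by (simp add: add_mset_commute)
    moreover have "ci V (\<Union>(set_mset Rs)) C \<le> ci V (\<Union>(set_mset (add_mset U Rs))) C"
      by (rule ci_mono) auto
    ultimately show "ci V (\<Union>(set_mset Rs)) C = 0" using ci_nonneg[of V "\<Union>(set_mset Rs)" C] by simp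
  qed
  then show ?case using h1 by (simp add: tc_add)
qed

lemma core:
  assumes tcP: "tc C Ps = 0"
    and uniq: "\<And>m. size (filter_mset (\<lambda>P. m \<in> P) Ps) \<le> 1"
    and sub: "\<Union>(set_mset Us) \<subseteq> \<Union>(set_mset Ps)"
    and C1: "C \<subseteq> C2" and C2: "C2 \<subseteq> C \<union> \<Union>(set_mset Ps)"
    and cross: "\<And>A B m1 m2. {#A, B#} \<subseteq># Us \<Longrightarrow> m1 \<in> A \<Longrightarrow> m2 \<in> B \<Longrightarrow>
                  \<exists>A' B'. {#A', B'#} \<subseteq># Ps \<and> m1 \<in> A' \<and> m2 \<in> B'"
  shows "tc C2 Us = 0"
proof (rule tc_pairs_zero)
  fix U Rs assume Us: "Us = add_mset U Rs"
  define PU where "PU = filter_mset (\<lambda>P. P \<inter> U \<noteq> {}) Ps"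
  define PR where "PR = filter_mset (\<lambda>P. \<not> (P \<inter> U \<noteq> {})) Ps"
  have Ps: "Ps = PU + PR" unfolding PU_def PR_def by (rule multiset_partition)
  define A where "A = \<Union>(set_mset PU)"
  define B where "B = \<Union>(set_mset PR)"
  have AB: "A \<union> B = \<Union>(set_mset Ps)" proof -
    have "set_mset Ps = set_mset PU \<union> set_mset PR" using Ps by (metis set_mset_union)
    then show ?thesis unfolding A_def B_def by auto
  qed
  have ciAB: "ci A B C = 0"
  proof -
    have "tc C Ps = tc C PU + tc C PR + ci A B C" unfolding A_def B_def by (subst Ps) (rule tc_group)
    then show ?thesis using tcP tc_nonneg[of C PU] tc_nonneg[of C PR] ci_nonneg[of A B C] by simp
  qed
  have UA: "U \<subseteq> A"
  proof
    fix m assume m: "m \<in> U"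
    then have "m \<in> \<Union>(set_mset Us)" using Us by auto
    then obtain P where P: "P \<in># Ps" "m \<in> P" using sub by blast
    then have "P \<in># PU" using m unfolding PU_def by auto
    then show "m \<in> A" using P unfolding A_def by auto
  qed
  have RB: "\<Union>(set_mset Rs) \<subseteq> B"
  proof
    fix m2 assume "m2 \<in> \<Union>(set_mset Rs)"
    then obtain V where V: "V \<in># Rs" "m2 \<in> V" by blast
    then have "m2 \<in> \<Union>(set_mset Us)" using Us by auto
    then obtain P where P: "P \<in># Ps" "m2 \<in> P" using sub by blast
    have "P \<inter> U = {}"
    proof (rule ccontr)
      assume "P \<inter> U \<noteq> {}"
      then obtain m1 where m1: "m1 \<in> P" "m1 \<in> U" by blast
      have "{#U, V#} \<subseteq># Us" using V Us by (simp add: mset_subset_eq_single)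
      from cross[OF this m1(2) V(2)] obtain A' B' where
        ab: "{#A', B'#} \<subseteq># Ps" "m1 \<in> A'" "m2 \<in> B'" by blast
      have A'P: "A' \<in># Ps" "B' \<in># Ps" using mset_subset_eqD[OF ab(1), of A'] mset_subset_eqD[OF ab(1), of B'] by auto
      have "A' = P" by (rule filter_le1_eq[OF uniq[of m1] A'P(1) P(1)]) (use ab m1 in auto)
      moreover have "B' = P" by (rule filter_le1_eq[OF uniq[of m2] A'P(2) P(1)]) (use ab P in auto)
      ultimately have "2 \<le> size (filter_mset (\<lambda>P. m1 \<in> P) Ps)"
        using ab m1 by (intro pair_sub_size2[of A' B']) auto
      then show False using uniq[of m1] by simp
    qed
    then have "P \<in># PR" using P unfolding PR_def by auto
    then show "m2 \<in> B" using P unfolding B_def by auto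
  qed
  define EA where "EA = (C2 - C) \<inter> A"
  define EB where "EB = (C2 - C) \<inter> B"
  have C2eq: "C2 = EA \<union> (EB \<union> C)" using C1 C2 AB unfolding EA_def EB_def by auto
  have c1: "ci A B (EB \<union> C) = 0"
  proof -
    have "ci A B C = ci A EB C + ci A B (EB \<union> C)" by (rule ci_chain) (auto simp: EB_def)
    then show ?thesis using ciAB ci_nonneg[of A EB C] ci_nonneg[of A B "EB \<union> C"] by simp
  qed
  have c2: "ci A B C2 = 0"
  proof -
    have "ci B A (EB \<union> C) = ci B EA (EB \<union> C) + ci B A (EA \<union> (EB \<union> C))" by (rule ci_chain) (auto simp: EA_def)
    then show ?thesis using c1 ci_nonneg[of B EA "EB \<union> C"] ci_nonneg[of B A "EA \<union> (EB \<union> C)"] C2eq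
      by (simp add: ci_sym)
  qed
  have "ci U (\<Union>(set_mset Rs)) C2 \<le> ci A B C2" by (rule ci_mono[OF UA RB])
  then show "ci U (\<Union>(set_mset Rs)) C2 = 0" using c2 ci_nonneg[of U "\<Union>(set_mset Rs)" C2] by simp
qed

end


lemma filter_all: "(\<And>x. x \<in># M \<Longrightarrow> P x) \<Longrightarrow> filter_mset P M = M"
  by (induction M) auto

lemma pur_mem: "Q \<in># snd (pur K) \<Longrightarrow> Q \<inter> fst K = {} \<and> Q \<noteq> {}"
  by (auto simp: pur_def)

lemma pur_fst[simp]: "fst (pur K) = fst K" by (simp add: pur_def)

lemma rep_sub: "rep_idx Qs \<subseteq> \<Union>(set_mset Qs)"
proof
  fix i assume "i \<in> rep_idx Qs"
  then have "2 \<le> size (filter_mset (\<lambda>Q. i \<in> Q) Qs)" by (simp add: rep_idx_def)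
  then have "filter_mset (\<lambda>Q. i \<in> Q) Qs \<noteq> {#}" by (intro notI) simp
  then obtain Q where "Q \<in># filter_mset (\<lambda>Q. i \<in> Q) Qs" by (meson multiset_nonemptyE)
  then show "i \<in> \<Union>(set_mset Qs)" by auto
qed

lemma size_parts_le: "size (parts I Qs) \<le> size Qs"
  unfolding parts_def by (metis size_filter_mset_lesseq size_image_mset)

lemma PK_cases:
  "size (parts (IK K) (snd (pur K))) \<le> 1 \<or> PK K = parts (IK K) (snd (pur K))"
proof -
  let ?Qs = "snd (pur K)"
  show ?thesis
  proof (cases "size ?Qs \<le> 1")
    case True then show ?thesis using size_parts_le[of "IK K" ?Qs] by simp
  next
    case False
    then show ?thesis
      by (auto simp: PK_def canK_def can_pure_def Let_def IK_def)
  qed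
qed

lemma PK_sub: "P \<in># PK K \<Longrightarrow> \<exists>Q. Q \<in># snd (pur K) \<and> P \<subseteq> Q"
  by (auto simp: PK_def canK_def can_pure_def Let_def parts_def split: if_splits option.splits)

lemma PK_norep:
  assumes "IK K = {}"
  shows "PK K = snd (pur K)"
proof -
  have pe: "parts {} (snd (pur K)) = snd (pur K)"
  proof -
    have "parts {} (snd (pur K)) = filter_mset (\<lambda>P. P \<noteq> {}) (snd (pur K))"
      by (simp add: parts_def)
    also have "\<dots> = snd (pur K)" using pur_mem[of _ K] by (intro filter_all) auto
    finally show ?thesis .
  qed
  show ?thesis using assms pe
    by (auto simp: PK_def canK_def can_pure_def Let_def IK_def)
qed

lemma canK_degCMI: "canK degCMI = None"
  by (simp add: canK_def can_pure_def degCMI_def pur_def)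

lemma canK_some: "2 \<le> size (snd (pur K)) \<Longrightarrow> canK K \<noteq> None"
  by (auto simp: canK_def can_pure_def Let_def)

lemma filter_size_ge2: "{#A, A#} \<subseteq># Qs \<Longrightarrow> m \<in> A \<Longrightarrow> m \<in> rep_idx Qs"
  unfolding rep_idx_def using pair_sub_size2[of A A Qs "\<lambda>Q. m \<in> Q"] by auto


lemma parts_uniq: "size (filter_mset (\<lambda>P. m \<in> P) (parts (rep_idx Qs) Qs)) \<le> 1"
proof -
  let ?I = "rep_idx Qs"
  have "filter_mset (\<lambda>P. m \<in> P) (parts ?I Qs) = filter_mset (\<lambda>P. m \<in> P) (image_mset (\<lambda>Q. Q - ?I) Qs)"
    unfolding parts_def filter_filter_mset by (intro filter_mset_cong) auto
  also have "\<dots> = image_mset (\<lambda>Q. Q - ?I) (filter_mset (\<lambda>Q. m \<in> Q - ?I) Qs)"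
    by (simp add: filter_mset_image_mset)
  finally have e: "size (filter_mset (\<lambda>P. m \<in> P) (parts ?I Qs)) = size (filter_mset (\<lambda>Q. m \<in> Q - ?I) Qs)"
    by simp
  show ?thesis
  proof (cases "m \<in> ?I")
    case True
    have "filter_mset (\<lambda>Q. m \<in> Q - ?I) Qs = filter_mset (\<lambda>Q. False) Qs"
      by (intro filter_mset_cong) (use True in auto)
    then have z: "filter_mset (\<lambda>Q. m \<in> Q - ?I) Qs = {#}" by simp
    show ?thesis unfolding e z by simp
  next
    case False
    then have "size (filter_mset (\<lambda>Q. m \<in> Q) Qs) < 2" by (simp add: rep_idx_def)
    moreover have "filter_mset (\<lambda>Q. m \<in> Q - ?I) Qs = filter_mset (\<lambda>Q. m \<in> Q) Qs"
      using False by (intro filter_mset_cong) auto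
    ultimately show ?thesis unfolding e by simp
  qed
qed

lemma PK_uniq: "size (filter_mset (\<lambda>P. m \<in> P) (PK K)) \<le> 1"
proof (cases "canK K")
  case None
  then have "size (snd (pur K)) \<le> 1" by (auto simp: canK_def can_pure_def Let_def split: if_splits)
  moreover have "PK K = snd (pur K)" using None by (simp add: PK_def)
  ultimately show ?thesis using le_trans[OF size_filter_mset_lesseq[of "\<lambda>P. m \<in> P" "snd (pur K)"]] by simp
next
  case (Some a)
  then show ?thesis using parts_uniq[of m "snd (pur K)"]
    by (auto simp: PK_def canK_def can_pure_def Let_def split: if_splits)
qed

context poly begin

lemma tc_pur: "tc (fst K) (snd (pur K)) = tc (fst K) (snd K)"
  unfolding pur_def by (simp add: tc_filter_empty tc_minus_C)

lemma K_facts: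
  assumes v: "tc (fst K) (snd K) = 0" and fin: "finite (IK K)"
  shows "g (fst K \<union> IK K) = g (fst K)" "tc (fst K) (PK K) = 0"
proof -
  have v': "tc (fst K) (snd (pur K)) = 0" using v tc_pur by simp
  show "g (fst K \<union> IK K) = g (fst K)" using rep_idx_det[OF v'] fin by (simp add: IK_def)
  show "tc (fst K) (PK K) = 0"
  proof (cases "canK K")
    case None then show ?thesis using v' by (simp add: PK_def)
  next
    case (Some a)
    then show ?thesis using tc_parts_zero[OF v', of "rep_idx (snd (pur K))"]
      by (auto simp: PK_def canK_def can_pure_def Let_def tc_empty split: if_splits)
  qed
qed

end


context poly begin

lemma main_poly:
  assumes vK: "tc (fst K) (snd K) = 0" and finI: "finite (IK K)"
    and sc: "let K'' = RK K K'; C = fst K; P = \<Union>(set_mset (PK K)); S = C \<union> P;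
          C'' = fst K''; P'' = \<Union>(set_mset (PK K'')) in
       (canK K'' = None \<and> C \<subseteq> fst K') \<or>
       (canK K'' \<noteq> None \<and> IK K'' = {} \<and> P'' \<subseteq> P \<and> C \<subseteq> C'' \<and> C'' \<subseteq> S - P'' \<and>
        (\<forall>A B m1 m2. {#A, B#} \<subseteq># PK K'' \<longrightarrow> m1 \<in> A \<longrightarrow> m2 \<in> B \<longrightarrow>
            (\<exists>A' B'. {#A', B'#} \<subseteq># PK K \<and> m1 \<in> A' \<and> m2 \<in> B')))"
  shows "tc (fst K') (snd K') = 0"
proof -
  define C where "C = fst K"
  define I where "I = IK K"
  define C' where "C' = fst K'"
  define Qs' where "Qs' = snd (pur K')"
  define I' where "I' = IK K'"
  define D where "D = I' - I"
  define Ts where "Ts = filter_mset (\<lambda>T. T \<noteq> {}) (image_mset (\<lambda>P. P - I) (PK K'))"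
  define C0 where "C0 = C' - I"
  have gCI: "g (C \<union> I) = g C" using K_facts(1)[OF vK finI] by (simp add: C_def I_def)
  have tcP: "tc C (PK K) = 0" using K_facts(2)[OF vK finI] by (simp add: C_def)
  have RKeq: "RK K K' = (if D = {} \<and> size Ts \<le> 1 then degCMI else if D = {} then (C0, Ts)
      else if size Ts \<le> 1 then (C0, {#D, D#}) else (C0, {#D, D#} + Ts))"
    by (simp add: RK_def Let_def D_def Ts_def C0_def I_def I'_def C'_def)
  have memT: "T \<noteq> {} \<and> T \<inter> C' = {}" if "T \<in># Ts" for T
  proof -
    from that obtain P where P: "P \<in># PK K'" "T = P - I" "T \<noteq> {}" unfolding Ts_def by auto
    from PK_sub[OF P(1)] obtain Q where "Q \<in># snd (pur K')" "P \<subseteq> Q" by blast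
    then have "P \<inter> C' = {}" using pur_mem[of Q K'] unfolding C'_def by auto
    then show ?thesis using P by auto
  qed
  have DC: "D \<inter> C' = {}"
  proof -
    have "I' \<subseteq> \<Union>(set_mset Qs')" unfolding I'_def IK_def Qs'_def by (rule rep_sub)
    moreover have "\<And>Q. Q \<in># Qs' \<Longrightarrow> Q \<inter> C' = {}" using pur_mem unfolding Qs'_def C'_def by blast
    ultimately show ?thesis unfolding D_def by blast
  qed
  have C0C: "C0 \<subseteq> C'" unfolding C0_def by auto
  have Dcase: "canK (RK K K') \<noteq> None \<and> IK (RK K K') \<noteq> {}" if Dne: "D \<noteq> {}"
  proof -
    define R where "R = (if size Ts \<le> 1 then {#} else Ts)"
    have RK: "RK K K' = (C0, {#D, D#} + R)" using RKeq Dne unfolding R_def by auto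
    have DC0: "D - C0 = D" using DC C0C by auto
    have sp: "snd (pur (RK K K')) = {#D, D#} + filter_mset (\<lambda>Q. Q \<noteq> {}) (image_mset (\<lambda>Q. Q - C0) R)"
      unfolding RK pur_def using DC0 Dne by simp
    have "2 \<le> size (snd (pur (RK K K')))" unfolding sp by simp
    then have c1: "canK (RK K K') \<noteq> None" by (rule canK_some)
    from Dne obtain m where m: "m \<in> D" by blast
    have "{#D, D#} \<subseteq># snd (pur (RK K K'))" unfolding sp by simp
    then have "m \<in> rep_idx (snd (pur (RK K K')))" using m by (rule filter_size_ge2)
    then have "IK (RK K K') \<noteq> {}" unfolding IK_def by blast
    then show ?thesis using c1 by simp
  qed
  have Tcase: "RK K K' = (C0, Ts) \<and> snd (pur (RK K K')) = Ts \<and> canK (RK K K') \<noteq> None"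
    if De: "D = {}" and Ts2: "\<not> size Ts \<le> 1"
  proof -
    have RK: "RK K K' = (C0, Ts)" using RKeq De Ts2 by simp
    have "image_mset (\<lambda>Q. Q - C0) Ts = image_mset (\<lambda>Q. Q) Ts"
      using memT C0C by (intro image_mset_cong) blast
    then have sp: "snd (pur (RK K K')) = Ts"
      unfolding RK pur_def using memT by (simp add: filter_all)
    have "canK (RK K K') \<noteq> None" using Ts2 sp by (intro canK_some) simp
    then show ?thesis using RK sp by simp
  qed
  have common: "tc C' (snd K') = 0"
    if De: "D = {}" and CC': "C \<subseteq> C'" and big: "1 < size (parts I' Qs') \<Longrightarrow> tc C' Ts = 0"
  proof -
    have I'I: "I' \<subseteq> I" using De unfolding D_def by auto
    have gC'I: "g (C' \<union> I) = g C'"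
    proof -
      have "g (C' \<union> C \<union> I) = g (C' \<union> C)" by (rule det_cond[OF gCI])
      moreover have "C' \<union> C \<union> I = C' \<union> I" "C' \<union> C = C'" using CC' by auto
      ultimately show ?thesis by simp
    qed
    have gC'I': "g (C' \<union> I') = g C'"
    proof -
      have "g (C' \<union> I') \<le> g (C' \<union> I)" using I'I by (intro gmono) auto
      moreover have "g C' \<le> g (C' \<union> I')" by (intro gmono) auto
      ultimately show ?thesis using gC'I by simp
    qed
    have "tc C' (parts I' Qs') = 0"
    proof (cases "size (parts I' Qs') \<le> 1")
      case True then show ?thesis by (rule tc_size1)
    next
      case False
      then have PKe: "PK K' = parts I' Qs'" using PK_cases[of K'] unfolding I'_def Qs'_def by auto
      have "tc C' (PK K') = tc C' (image_mset (\<lambda>P. P - I) (PK K'))"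
        by (rule tc_det_minus[OF gC'I, symmetric])
      also have "\<dots> = tc C' Ts" unfolding Ts_def by (rule tc_filter_empty[symmetric])
      finally show ?thesis using big False PKe by simp
    qed
    then have "tc C' Qs' = 0" by (rule tc_from_parts[OF gC'I'])
    then show ?thesis using tc_pur[of K'] unfolding Qs'_def C'_def by simp
  qed
  from sc have "(canK (RK K K') = None \<and> C \<subseteq> C') \<or>
       (canK (RK K K') \<noteq> None \<and> IK (RK K K') = {} \<and> \<Union>(set_mset (PK (RK K K'))) \<subseteq> \<Union>(set_mset (PK K)) \<and>
        C \<subseteq> fst (RK K K') \<and> fst (RK K K') \<subseteq> (C \<union> \<Union>(set_mset (PK K))) - \<Union>(set_mset (PK (RK K K'))) \<and>
        (\<forall>A B m1 m2. {#A, B#} \<subseteq># PK (RK K K') \<longrightarrow> m1 \<in> A \<longrightarrow> m2 \<in> B \<longrightarrow>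
            (\<exists>A' B'. {#A', B'#} \<subseteq># PK K \<and> m1 \<in> A' \<and> m2 \<in> B')))"
    unfolding Let_def C_def C'_def .
  then show ?thesis
  proof
    assume a: "canK (RK K K') = None \<and> C \<subseteq> C'"
    have De: "D = {}" by (rule ccontr) (use Dcase a in auto)
    have Ts1: "size Ts \<le> 1" by (rule ccontr) (use Tcase[OF De] a in auto)
    have "tc C' (snd K') = 0" by (rule common[OF De]) (use a Ts1 tc_size1 in auto)
    then show ?thesis by (simp add: C'_def)
  next
    assume a: "canK (RK K K') \<noteq> None \<and> IK (RK K K') = {} \<and> \<Union>(set_mset (PK (RK K K'))) \<subseteq> \<Union>(set_mset (PK K)) \<and>
        C \<subseteq> fst (RK K K') \<and> fst (RK K K') \<subseteq> (C \<union> \<Union>(set_mset (PK K))) - \<Union>(set_mset (PK (RK K K'))) \<and>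
        (\<forall>A B m1 m2. {#A, B#} \<subseteq># PK (RK K K') \<longrightarrow> m1 \<in> A \<longrightarrow> m2 \<in> B \<longrightarrow>
            (\<exists>A' B'. {#A', B'#} \<subseteq># PK K \<and> m1 \<in> A' \<and> m2 \<in> B'))"
    have De: "D = {}" by (rule ccontr) (use Dcase a in auto)
    have Ts2: "\<not> size Ts \<le> 1"
    proof
      assume "size Ts \<le> 1"
      then have "RK K K' = degCMI" using RKeq De by simp
      then show False using a canK_degCMI by simp
    qed
    note T = Tcase[OF De Ts2]
    have "PK (RK K K') = snd (pur (RK K K'))" by (rule PK_norep) (use a in blast)
    also have "\<dots> = Ts" using T by blast
    finally have PKT: "PK (RK K K') = Ts" .
    have fstRK: "fst (RK K K') = C0" using T by simp
    have CC0: "C \<subseteq> C0" using a fstRK by simp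
    have CC': "C \<subseteq> C'" using CC0 C0C by auto
    have "tc C' (snd K') = 0"
    proof (rule common[OF De CC'])
      have gC'I: "g (C' \<union> I) = g C'"
      proof -
        have "g (C' \<union> C \<union> I) = g (C' \<union> C)" by (rule det_cond[OF gCI])
        moreover have "C' \<union> C \<union> I = C' \<union> I" "C' \<union> C = C'" using CC' by auto
        ultimately show ?thesis by simp
      qed
      have gC0I: "g (C0 \<union> I) = g C0"
      proof -
        have "g (C0 \<union> C \<union> I) = g (C0 \<union> C)" by (rule det_cond[OF gCI])
        moreover have "C0 \<union> C \<union> I = C0 \<union> I" "C0 \<union> C = C0" using CC0 by auto
        ultimately show ?thesis by simp
      qed
      have "tc C' Ts = tc (C' \<union> I) Ts" by (rule tc_det_cond[OF gC'I, symmetric])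
      also have "C' \<union> I = C0 \<union> I" unfolding C0_def by auto
      also have "tc (C0 \<union> I) Ts = tc C0 Ts" by (rule tc_det_cond[OF gC0I])
      also have "tc C0 Ts = 0"
      proof (rule core[OF tcP PK_uniq])
        show "\<Union>(set_mset Ts) \<subseteq> \<Union>(set_mset (PK K))" using a PKT by simp
        show "C \<subseteq> C0" by (rule CC0)
        show "C0 \<subseteq> C \<union> \<Union>(set_mset (PK K))" using a fstRK by auto
        show "\<exists>A' B'. {#A', B'#} \<subseteq># PK K \<and> m1 \<in> A' \<and> m2 \<in> B'"
          if "{#A, B#} \<subseteq># Ts" "m1 \<in> A" "m2 \<in> B" for A B m1 m2
          using a PKT that by blast
      qed
      finally show "tc C' Ts = 0" .
    qed
    then show ?thesis by (simp add: C'_def)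
  qed
qed

end


lemma lp_const: "lp M (\<lambda>\<omega>. c) \<omega> = 0"
  by (simp add: lp_def map_pmf_const)

lemma lp_const': "lp M (\<lambda>\<omega>. c) = (\<lambda>\<omega>. 0)"
  by (rule ext) (rule lp_const)

lemma ent_finite_empty: "ent_finite M (jointRV X {})"
proof -
  have "jointRV X {} = (\<lambda>\<omega>. (\<lambda>i. undefined))" by (auto simp: jointRV_def fun_eq_iff)
  then show ?thesis unfolding ent_integral by (simp add: lp_const')
qed

lemma ent_finite_single: "ent_finite M (X i) \<Longrightarrow> ent_finite M (jointRV X {i})"
proof -
  assume a: "ent_finite M (X i)"
  have "ent_finite M (jointRV X {i}) \<longleftrightarrow> ent_finite M (X i)"
  proof (rule ent_inv(2)[where f = "\<lambda>v. (\<lambda>j. if j = i then v else undefined)"])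
    show "\<And>\<omega>. jointRV X {i} \<omega> = (\<lambda>j. if j = i then X i \<omega> else undefined)"
      by (auto simp: jointRV_def fun_eq_iff)
    show "inj_on (\<lambda>v. (\<lambda>j. if j = i then v else undefined)) (X i ` set_pmf M)"
      by (auto simp: inj_on_def fun_eq_iff)
  qed
  then show ?thesis using a by simp
qed

lemma ent_finite_all:
  assumes fe: "finite_entropies n M X" and A: "A \<subseteq> {1..n}"
  shows "ent_finite M (jointRV X A)"
proof -
  have "finite A" using A finite_subset by blast
  then show ?thesis using A
  proof (induction A rule: finite_induct)
    case empty show ?case by (rule ent_finite_empty)
  next
    case (insert i A)
    have a: "ent_finite M (jointRV X (A \<union> {}))" using insert by simp
    have b: "ent_finite M (jointRV X ({i} \<union> {}))"
      using ent_finite_single[of M X i] fe insert.prems by (simp add: finite_entropies_def)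
    have "ent_finite M (jointRV X (A \<union> {i} \<union> {}))"
      by (rule H_sub(1)[OF a b ent_finite_empty])
    then show ?case by (simp add: insert_commute)
  qed
qed

lemma poly_H:
  assumes fe: "finite_entropies n M X"
  shows "poly (\<lambda>A. H M X (A \<inter> {1..n}))"
proof
  let ?N = "{1..n::nat}"
  have fin: "\<And>A. ent_finite M (jointRV X (A \<inter> ?N))" by (rule ent_finite_all[OF fe]) auto
  show "H M X (A \<inter> ?N) \<le> H M X (B \<inter> ?N)" if "A \<subseteq> B" for A B
  proof -
    have "H M X (B \<inter> ?N \<union> B \<inter> ?N \<union> A \<inter> ?N) + H M X (A \<inter> ?N) \<le> H M X (B \<inter> ?N \<union> A \<inter> ?N) + H M X (B \<inter> ?N \<union> A \<inter> ?N)"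
      by (rule H_sub(2)) (auto intro!: ent_finite_all[OF fe])
    moreover have "B \<inter> ?N \<union> A \<inter> ?N = B \<inter> ?N" using that by auto
    ultimately show ?thesis by simp
  qed
  show "H M X ((A \<union> B \<union> C) \<inter> ?N) + H M X (C \<inter> ?N) \<le> H M X ((A \<union> C) \<inter> ?N) + H M X ((B \<union> C) \<inter> ?N)" for A B C
  proof -
    have "H M X (A \<inter> ?N \<union> B \<inter> ?N \<union> C \<inter> ?N) + H M X (C \<inter> ?N) \<le> H M X (A \<inter> ?N \<union> C \<inter> ?N) + H M X (B \<inter> ?N \<union> C \<inter> ?N)"
      by (rule H_sub(2)) (auto intro!: ent_finite_all[OF fe])
    then show ?thesis by (simp flip: Int_Un_distrib2)
  qed
qed

lemma valid_tc:
  assumes wf: "wf_cmi n K" and fe: "finite_entropies n M X"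
  shows "valid M X K \<longleftrightarrow> poly.tc (\<lambda>A. H M X (A \<inter> {1..n})) (fst K) (snd K) = 0"
proof -
  let ?N = "{1..n::nat}"
  have C: "fst K \<subseteq> ?N" and Q: "\<And>Q. Q \<in># snd K \<Longrightarrow> Q \<subseteq> ?N" using wf by (auto simp: wf_cmi_def)
  have s: "(\<Sum>Q\<in>#snd K. condH M X Q (fst K)) = (\<Sum>Q\<in>#snd K. H M X ((Q \<union> fst K) \<inter> ?N) - H M X (fst K \<inter> ?N))"
  proof -
    have "image_mset (\<lambda>Q. condH M X Q (fst K)) (snd K) = image_mset (\<lambda>Q. H M X ((Q \<union> fst K) \<inter> ?N) - H M X (fst K \<inter> ?N)) (snd K)"
    proof (rule image_mset_cong)
      fix Q assume "Q \<in># snd K"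
      then have "(Q \<union> fst K) \<inter> ?N = Q \<union> fst K" "fst K \<inter> ?N = fst K" using Q[of Q] C by auto
      then show "condH M X Q (fst K) = H M X ((Q \<union> fst K) \<inter> ?N) - H M X (fst K \<inter> ?N)"
        by (simp add: condH_def)
    qed
    then show ?thesis by simp
  qed
  have u: "(\<Union>(set_mset (snd K)) \<union> fst K) \<inter> ?N = \<Union>(set_mset (snd K)) \<union> fst K" "fst K \<inter> ?N = fst K"
    using Q C by auto
  show ?thesis unfolding valid_def s poly.tc_def[OF poly_H[OF fe]] using u by (simp add: condH_def)
qed


lemma transfer_ent:
  fixes M :: "'w pmf" and fw :: "'w \<Rightarrow> 'u" and Y' :: "'u \<Rightarrow> 'c" and Y :: "'w \<Rightarrow> 'b"
  assumes tr: "\<And>\<omega>. \<omega> \<in> set_pmf M \<Longrightarrow> Y' (fw \<omega>) = F (Y \<omega>)" and inj: "inj_on F (Y ` set_pmf M)"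
  shows "ent (map_pmf fw M) Y' = ent M Y" "ent_finite (map_pmf fw M) Y' \<longleftrightarrow> ent_finite M Y"
proof -
  have e: "lp (map_pmf fw M) Y' (fw \<omega>) = lp M Y \<omega>" if \<omega>: "\<omega> \<in> set_pmf M" for \<omega>
  proof -
    have "lp (map_pmf fw M) Y' (fw \<omega>) = lp M (\<lambda>\<omega>. Y' (fw \<omega>)) \<omega>" by (simp add: lp_def map_pmf_comp)
    also have "\<dots> = lp M Y \<omega>" by (rule lp_inv[OF \<omega> tr inj])
    finally show ?thesis .
  qed
  have "integral\<^sup>L (map_pmf fw M) (lp (map_pmf fw M) Y') = integral\<^sup>L M (\<lambda>\<omega>. lp (map_pmf fw M) Y' (fw \<omega>))"
    by simp
  also have "\<dots> = integral\<^sup>L M (lp M Y)" by (rule lp_cong_int(2)) (rule e)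
  finally show "ent (map_pmf fw M) Y' = ent M Y" by (simp add: ent_integral)
  have "integrable (map_pmf fw M) (lp (map_pmf fw M) Y') \<longleftrightarrow> integrable M (\<lambda>\<omega>. lp (map_pmf fw M) Y' (fw \<omega>))"
    by simp
  also have "\<dots> \<longleftrightarrow> integrable M (lp M Y)" by (rule lp_cong_int(1)) (rule e)
  finally show "ent_finite (map_pmf fw M) Y' \<longleftrightarrow> ent_finite M Y" by (simp add: ent_integral)
qed

lemma degen_valid:
  fixes M :: "'w pmf" and X :: "nat \<Rightarrow> 'w \<Rightarrow> 'v"
  assumes dg: "degenerate n K" and fe: "finite_entropies n M X"
  shows "valid M X K"
proof -
  define S where "S = set_pmf M"
  have cS: "countable S" by (simp add: S_def)
  define V where "V = (\<Union>i. X i ` S)"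
  have cV: "countable V" unfolding V_def using cS by auto
  define fw where "fw = to_nat_on S"
  define gv where "gv = to_nat_on V"
  define M' where "M' = map_pmf fw M"
  define X' :: "nat \<Rightarrow> nat \<Rightarrow> nat" where "X' = (\<lambda>i m. gv (X i (from_nat_into S m)))"
  have bk: "from_nat_into S (fw \<omega>) = \<omega>" if "\<omega> \<in> S" for \<omega>
    unfolding fw_def by (rule from_nat_into_to_nat_on[OF cS that])
  have ginj: "inj_on gv V" unfolding gv_def by (rule inj_on_to_nat_on[OF cV])
  have XV: "X i \<omega> \<in> V" if "\<omega> \<in> S" for i \<omega> unfolding V_def using that by auto
  have HA: "H M' X' A = H M X A \<and> (ent_finite M' (jointRV X' A) \<longleftrightarrow> ent_finite M (jointRV X A))" for A
  proof -
    define F where "F = (\<lambda>r. restrict (\<lambda>i. gv (r i)) A)"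
    have tr: "jointRV X' A (fw \<omega>) = F (jointRV X A \<omega>)" if "\<omega> \<in> set_pmf M" for \<omega>
    proof -
      have "from_nat_into S (fw \<omega>) = \<omega>" using bk that S_def by blast
      then show ?thesis by (auto simp: jointRV_def X'_def F_def fun_eq_iff restrict_def)
    qed
    have inj: "inj_on F (jointRV X A ` set_pmf M)"
    proof (rule inj_onI)
      fix r s assume r: "r \<in> jointRV X A ` set_pmf M" and s: "s \<in> jointRV X A ` set_pmf M" and e: "F r = F s"
      from r obtain \<omega>1 where \<omega>1: "\<omega>1 \<in> S" "r = jointRV X A \<omega>1" unfolding S_def by auto
      from s obtain \<omega>2 where \<omega>2: "\<omega>2 \<in> S" "s = jointRV X A \<omega>2" unfolding S_def by auto
      show "r = s"
      proof
        fix i show "r i = s i"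
        proof (cases "i \<in> A")
          case True
          then have "gv (X i \<omega>1) = gv (X i \<omega>2)" using e \<omega>1 \<omega>2
            by (auto simp: F_def jointRV_def fun_eq_iff restrict_def split: if_splits)
          then have "X i \<omega>1 = X i \<omega>2" using inj_onD[OF ginj] XV \<omega>1 \<omega>2 by blast
          then show ?thesis using \<omega>1 \<omega>2 True by (simp add: jointRV_def)
        next
          case False then show ?thesis using \<omega>1 \<omega>2 by (simp add: jointRV_def)
        qed
      qed
    qed
    show ?thesis using transfer_ent[where M=M and fw=fw and Y'="jointRV X' A" and Y="jointRV X A" and F=F, OF tr inj] unfolding M'_def H_def by simp
  qed
  have Hi: "ent_finite M' (X' i) \<longleftrightarrow> ent_finite M (X i)" for i
  proof -
    have tr: "X' i (fw \<omega>) = gv (X i \<omega>)" if "\<omega> \<in> set_pmf M" for \<omega>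
    proof -
      have "from_nat_into S (fw \<omega>) = \<omega>" using bk that S_def by blast
      then show ?thesis by (simp add: X'_def)
    qed
    have inj: "inj_on gv (X i ` set_pmf M)" using ginj XV unfolding S_def by (meson image_subsetI inj_on_subset)
    show ?thesis using transfer_ent(2)[where M=M and fw=fw and Y'="X' i" and Y="X i" and F=gv, OF tr inj] unfolding M'_def by simp
  qed
  have fe': "finite_entropies n M' X'" using fe Hi by (simp add: finite_entropies_def)
  have "valid M' X' K" using dg fe' unfolding degenerate_def by blast
  then show ?thesis using HA by (simp add: valid_def condH_def)
qed

theorem mainTheorem13:
  fixes M :: "'w pmf" and X :: "nat \<Rightarrow> 'w \<Rightarrow> 'v" and n :: nat and K K' :: cmi
  assumes "wf_cmi n K" and "wf_cmi n K'"
    and "sub_cmi n K' K"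
    and "finite_entropies n M X"
    and "valid M X K"
  shows "valid M X K'"
proof -
  note fe = assms(4)
  interpret poly "\<lambda>A. H M X (A \<inter> {1..n})" by (rule poly_H[OF fe])
  from assms(3) have "degenerate n K' \<or> (let K'' = RK K K'; C = fst K; P = \<Union>(set_mset (PK K)); S = C \<union> P;
          C'' = fst K''; P'' = \<Union>(set_mset (PK K'')) in
       (canK K'' = None \<and> C \<subseteq> fst K') \<or>
       (canK K'' \<noteq> None \<and> IK K'' = {} \<and> P'' \<subseteq> P \<and> C \<subseteq> C'' \<and> C'' \<subseteq> S - P'' \<and>
        (\<forall>A B m1 m2. {#A, B#} \<subseteq># PK K'' \<longrightarrow> m1 \<in> A \<longrightarrow> m2 \<in> B \<longrightarrow>
            (\<exists>A' B'. {#A', B'#} \<subseteq># PK K \<and> m1 \<in> A' \<and> m2 \<in> B'))))"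
    unfolding sub_cmi_def .
  then show ?thesis
  proof
    assume "degenerate n K'"
    then show ?thesis by (rule degen_valid[OF _ fe])
  next
    assume sc: "let K'' = RK K K'; C = fst K; P = \<Union>(set_mset (PK K)); S = C \<union> P;
          C'' = fst K''; P'' = \<Union>(set_mset (PK K'')) in
       (canK K'' = None \<and> C \<subseteq> fst K') \<or>
       (canK K'' \<noteq> None \<and> IK K'' = {} \<and> P'' \<subseteq> P \<and> C \<subseteq> C'' \<and> C'' \<subseteq> S - P'' \<and>
        (\<forall>A B m1 m2. {#A, B#} \<subseteq># PK K'' \<longrightarrow> m1 \<in> A \<longrightarrow> m2 \<in> B \<longrightarrow>
            (\<exists>A' B'. {#A', B'#} \<subseteq># PK K \<and> m1 \<in> A' \<and> m2 \<in> B')))"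
    have vK: "tc (fst K) (snd K) = 0" using valid_tc[OF assms(1) fe] assms(5) by simp
    have "IK K \<subseteq> \<Union>(set_mset (snd (pur K)))" unfolding IK_def by (rule rep_sub)
    also have "\<dots> \<subseteq> \<Union>(set_mset (snd K))" by (auto simp: pur_def)
    also have "\<dots> \<subseteq> {1..n}" using assms(1) by (auto simp: wf_cmi_def)
    finally have finI: "finite (IK K)" using finite_subset by blast
    have "tc (fst K') (snd K') = 0" by (rule main_poly[OF vK finI sc])
    then show ?thesis using valid_tc[OF assms(2) fe] by simp
  qed
qed

end
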